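(* Let $d\ge1$, let $x_0\neq x_1\in\mathbb{R}^d$ have the same Euclidean norm $\|x\|_2$, and let $\rho=\langle x_0,x_1\rangle/\|x\|_2^2$ with $|\rho|<1$. Let $n_0,\dots,n_{M-1}$ be i.i.d. $\mathcal{N}(0,I_{d\times d})$, and let $\hat{x}_0,\hat{x}_1$ be the output of the hard-assignment algorithm with templates $x_0,x_1$. Then, almost surely as $M\to\infty$, $\hat{x}_0\to\sqrt{\frac{1}{\pi(1-\rho)\|x\|_2^2}}\,(x_0-x_1)$ and $\hat{x}_1\to\sqrt{\frac{1}{\pi(1-\rho)\|x\|_2^2}}\,(x_1-x_0)$.
   Context: Hard-assignment algorithm: for each $i$ let $\hat{R}_i=\arg\max_{\ell\in\{0,1\}}\langle n_i,x_\ell\rangle$, $\mathcal{A}_\ell=\{n_i:\hat{R}_i=\ell\}$, and $\hat{x}_\ell=\frac{1}{|\mathcal{A}_\ell|}\sum_{n_i\in\mathcal{A}_\ell}n_i$. *)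

theory Defs
  imports "HOL-Probability.Probability"
begin

definition std_normal_vec :: "'a::euclidean_space measure" where
  "std_normal_vec = density lborel
     (\<lambda>x. ennreal ((2 * pi) powr (- real DIM('a) / 2) * exp (- (norm x)\<^sup>2 / 2)))"

definition hard_assign :: "'a::real_inner \<Rightarrow> 'a \<Rightarrow> 'a \<Rightarrow> nat" where
  "hard_assign x0 x1 n = (if inner n x1 \<le> inner n x0 then 0 else 1)"

definition hard_cluster :: "'a::real_inner \<Rightarrow> 'a \<Rightarrow> (nat \<Rightarrow> 'a) \<Rightarrow> nat \<Rightarrow> nat \<Rightarrow> nat set" where
  "hard_cluster x0 x1 ns m l = {i \<in> {..<m}. hard_assign x0 x1 (ns i) = l}"

definition hard_estimate :: "'a::real_inner \<Rightarrow> 'a \<Rightarrow> (nat \<Rightarrow> 'a) \<Rightarrow> nat \<Rightarrow> nat \<Rightarrow> 'a" where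
  "hard_estimate x0 x1 ns m l =
     (1 / real (card (hard_cluster x0 x1 ns m l))) *\<^sub>R (\<Sum>i\<in>hard_cluster x0 x1 ns m l. ns i)"

end

theory Submission
  imports Defs
begin


context prob_space begin

lemma integrable_pow_le4:
  fixes X :: "'a \<Rightarrow> real"
  assumes X[measurable]: "X \<in> borel_measurable M" and i4: "integrable M (\<lambda>\<omega>. (X \<omega>)^4)" and k: "k \<le> 4"
  shows "integrable M (\<lambda>\<omega>. (X \<omega>)^k)"
proof (rule Bochner_Integration.integrable_bound)
  show "integrable M (\<lambda>\<omega>. 1 + (X \<omega>)^4)" using i4 by simp
  show "(\<lambda>\<omega>. (X \<omega>)^k) \<in> borel_measurable M" by measurable
  show "AE \<omega> in M. norm ((X \<omega>)^k) \<le> norm (1 + (X \<omega>)^4)"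
  proof (intro AE_I2)
    fix \<omega>
    have "\<bar>X \<omega>\<bar>^k \<le> 1 + \<bar>X \<omega>\<bar>^4"
    proof (cases "\<bar>X \<omega>\<bar> \<le> 1")
      case True
      then have "\<bar>X \<omega>\<bar>^k \<le> 1" by (simp add: power_le_one)
      moreover have "0 \<le> \<bar>X \<omega>\<bar>^4" by simp
      ultimately show ?thesis by linarith
    next
      case False
      then have "\<bar>X \<omega>\<bar>^k \<le> \<bar>X \<omega>\<bar>^4" using k by (intro power_increasing) auto
      then show ?thesis by simp
    qed
    then show "norm ((X \<omega>)^k) \<le> norm (1 + (X \<omega>)^4)"
      by (simp add: power_abs)
  qed
qed

lemma fourth_moment_sum:
  fixes Y :: "nat \<Rightarrow> 'a \<Rightarrow> real"
  assumes ind: "indep_vars (\<lambda>_. borel) Y UNIV"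
   and int4: "\<And>i. integrable M (\<lambda>\<omega>. (Y i \<omega>)^4)"
   and mean0: "\<And>i. expectation (Y i) = 0"
   and C2: "\<And>i. expectation (\<lambda>\<omega>. (Y i \<omega>)^2) = c2"
   and C4: "\<And>i. expectation (\<lambda>\<omega>. (Y i \<omega>)^4) \<le> c4"
  shows "integrable M (\<lambda>\<omega>. (\<Sum>i<m. Y i \<omega>)^4) \<and>
    expectation (\<lambda>\<omega>. (\<Sum>i<m. Y i \<omega>)^2) = m * c2 \<and>
    expectation (\<lambda>\<omega>. (\<Sum>i<m. Y i \<omega>)^4) \<le> m * c4 + 3 * m^2 * c2^2"
proof (induction m)
  case 0
  then show ?case by simp
next
  case (Suc m)
  have rv[measurable]: "\<And>i. Y i \<in> borel_measurable M"
    using ind unfolding indep_vars_def by auto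
  define S where "S = (\<lambda>\<omega>. \<Sum>i<m. Y i \<omega>)"
  have Smeas[measurable]: "S \<in> borel_measurable M" unfolding S_def by measurable
  have S4: "integrable M (\<lambda>\<omega>. (S \<omega>)^4)" and S2: "expectation (\<lambda>\<omega>. (S \<omega>)^2) = m * c2"
    and S4b: "expectation (\<lambda>\<omega>. (S \<omega>)^4) \<le> m * c4 + 3 * m^2 * c2^2"
    using Suc.IH unfolding S_def by auto
  have Si: "integrable M (\<lambda>\<omega>. (S \<omega>)^k)" if "k \<le> 4" for k
    using integrable_pow_le4[OF Smeas S4 that] .
  have Yi: "integrable M (\<lambda>\<omega>. (Y m \<omega>)^k)" if "k \<le> 4" for k
    using integrable_pow_le4[OF rv int4 that] .
  have ES: "expectation S = 0"
    unfolding S_def using mean0 integrable_pow_le4[OF rv int4, of 1] by (simp add: Bochner_Integration.integral_sum)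
  have indYS: "indep_var borel (Y m) borel S"
    unfolding S_def by (rule indep_vars_sum) (auto intro: indep_vars_subset[OF ind])
  have indk: "indep_var borel (\<lambda>\<omega>. (Y m \<omega>)^k) borel (\<lambda>\<omega>. (S \<omega>)^j)" for j k
    using indep_var_compose[OF indYS, of "\<lambda>x. x^k" borel "\<lambda>x. x^j" borel] by (simp add: comp_def)
  have prod: "integrable M (\<lambda>\<omega>. (S \<omega>)^j * (Y m \<omega>)^k) \<and>
      expectation (\<lambda>\<omega>. (S \<omega>)^j * (Y m \<omega>)^k) = expectation (\<lambda>\<omega>. (S \<omega>)^j) * expectation (\<lambda>\<omega>. (Y m \<omega>)^k)"
    if "j \<le> 4" "k \<le> 4" for j k
    using indep_var_lebesgue_integral[OF indk Yi[OF that(2)] Si[OF that(1)]]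
      indep_var_integrable[OF indk Yi[OF that(2)] Si[OF that(1)]] by (simp add: mult.commute)
  have sumeq: "\<And>\<omega>. (\<Sum>i<Suc m. Y i \<omega>) = S \<omega> + Y m \<omega>"
    unfolding S_def by simp
  have e4: "(\<lambda>\<omega>. (S \<omega> + Y m \<omega>)^4) = (\<lambda>\<omega>. (S \<omega>)^4 * (Y m \<omega>)^0 + 4 * ((S \<omega>)^3 * (Y m \<omega>)^1)
     + 6 * ((S \<omega>)^2 * (Y m \<omega>)^2) + 4 * ((S \<omega>)^1 * (Y m \<omega>)^3) + (S \<omega>)^0 * (Y m \<omega>)^4)"
    by (rule ext) (simp add: power2_eq_square power3_eq_cube power4_eq_xxxx algebra_simps)
  have e2: "(\<lambda>\<omega>. (S \<omega> + Y m \<omega>)^2) = (\<lambda>\<omega>. (S \<omega>)^2 * (Y m \<omega>)^0 + 2 * ((S \<omega>)^1 * (Y m \<omega>)^1)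
     + (S \<omega>)^0 * (Y m \<omega>)^2)"
    by (rule ext) (simp add: power2_eq_square algebra_simps)
  note P = prod[of 4 0] prod[of 3 1] prod[of 2 2] prod[of 1 3] prod[of 0 4] prod[of 2 0] prod[of 1 1] prod[of 0 2]
  have I4: "integrable M (\<lambda>\<omega>. (S \<omega> + Y m \<omega>)^4)"
    unfolding e4 using P by simp
  have E4: "expectation (\<lambda>\<omega>. (S \<omega> + Y m \<omega>)^4) = expectation (\<lambda>\<omega>. (S \<omega>)^4) + 6 * (m * c2 * c2) + expectation (\<lambda>\<omega>. (Y m \<omega>)^4)"
    unfolding e4 using P ES mean0[of m] S2 C2[of m] by (simp add: Bochner_Integration.integral_add)
  have E2: "expectation (\<lambda>\<omega>. (S \<omega> + Y m \<omega>)^2) = m * c2 + c2"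
    unfolding e2 using P ES mean0[of m] S2 C2[of m] by (simp add: Bochner_Integration.integral_add)
  have c2nn: "0 \<le> c2" using C2[of 0] by (metis integral_nonneg_AE AE_I2 zero_le_power2)
  have "expectation (\<lambda>\<omega>. (S \<omega> + Y m \<omega>)^4) \<le> m * c4 + 3 * m^2 * c2^2 + 6 * (m * c2 * c2) + c4"
    unfolding E4 using S4b C4[of m] by linarith
  also have "\<dots> \<le> Suc m * c4 + 3 * (Suc m)^2 * c2^2"
    using c2nn by (simp add: power2_eq_square algebra_simps)
  finally have G: "integrable M (\<lambda>\<omega>. (S \<omega> + Y m \<omega>)^4) \<and>
    expectation (\<lambda>\<omega>. (S \<omega> + Y m \<omega>)^2) = real (Suc m) * c2 \<and>
    expectation (\<lambda>\<omega>. (S \<omega> + Y m \<omega>)^4) \<le> real (Suc m) * c4 + 3 * (real (Suc m))^2 * c2^2"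
    using I4 E2 by (simp add: algebra_simps)
  show ?case unfolding sumeq using G by (simp only:)
qed

lemma slln_zero_mean:
  fixes Y :: "nat \<Rightarrow> 'a \<Rightarrow> real"
  assumes ind: "indep_vars (\<lambda>_. borel) Y UNIV"
   and int4: "\<And>i. integrable M (\<lambda>\<omega>. (Y i \<omega>)^4)"
   and mean0: "\<And>i. expectation (Y i) = 0"
   and C2: "\<And>i. expectation (\<lambda>\<omega>. (Y i \<omega>)^2) = c2"
   and C4: "\<And>i. expectation (\<lambda>\<omega>. (Y i \<omega>)^4) \<le> c4"
  shows "AE \<omega> in M. (\<lambda>m. (\<Sum>i<m. Y i \<omega>) / real m) \<longlonglongrightarrow> 0"
proof -
  have rv[measurable]: "\<And>i. Y i \<in> borel_measurable M"
    using ind unfolding indep_vars_def by auto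
  define S where "S = (\<lambda>m \<omega>. \<Sum>i<m. Y i \<omega>)"
  have Smeas[measurable]: "S m \<in> borel_measurable M" for m unfolding S_def by measurable
  have FM: "integrable M (\<lambda>\<omega>. (S m \<omega>)^4) \<and> expectation (\<lambda>\<omega>. (S m \<omega>)^4) \<le> m * c4 + 3 * m^2 * c2^2" for m
    using fourth_moment_sum[OF ind int4 mean0 C2 C4, of m] unfolding S_def by simp
  have c2nn: "0 \<le> c2" using C2[of 0] by (metis integral_nonneg_AE AE_I2 zero_le_power2)
  have "0 \<le> expectation (\<lambda>\<omega>. (Y 0 \<omega>)^4)" by (intro integral_nonneg_AE AE_I2) simp
  then have c4nn: "0 \<le> c4" using C4[of 0] by linarith
  define K where "K = c4 + 3 * c2^2"
  have Knn: "0 \<le> K" unfolding K_def using c4nn by simp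
  have one: "AE \<omega> in M. eventually (\<lambda>m. \<bar>S m \<omega> / real m\<bar> < 1 / real (Suc k)) sequentially" for k
  proof -
    define e where "e = 1 / real (Suc k)"
    have e: "0 < e" unfolding e_def by simp
    define A where "A = (\<lambda>m. {\<omega>\<in>space M. (S m \<omega>)^4 \<ge> (real m * e)^4})"
    have Asets[measurable]: "A m \<in> sets M" for m unfolding A_def by measurable
    have Abound: "measure M (A m) \<le> K / e^4 * inverse (real m ^ 2)" if "m > 0" for m
    proof -
      have pos: "0 < (real m * e)^4" using that e by simp
      have "measure M (A m) \<le> expectation (\<lambda>\<omega>. (S m \<omega>)^4) / (real m * e)^4"
        unfolding A_def by (rule integral_Markov_inequality_measure[OF conjunct1[OF FM] _ _ pos]) auto
      also have "\<dots> \<le> (m * c4 + 3 * m^2 * c2^2) / (real m * e)^4"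
        using FM[of m] pos by (intro divide_right_mono) auto
      also have "\<dots> \<le> (m^2 * K) / (real m * e)^4"
      proof (intro divide_right_mono)
        have "real m \<le> real m * real m" 
        proof -
          have "1 \<le> real m" using that by simp
          then show ?thesis using mult_left_mono[of 1 "real m" "real m"] by simp
        qed
        then have "c4 * real m \<le> c4 * (real m * real m)" using c4nn by (rule mult_left_mono)
        then show "m * c4 + 3 * m^2 * c2^2 \<le> m^2 * K"
          unfolding K_def by (simp add: algebra_simps power2_eq_square)
      qed simp
      also have "\<dots> = K / e^4 * inverse (real m ^ 2)"
        using that e by (simp add: field_simps power2_eq_square power4_eq_xxxx)
      finally show ?thesis .
    qed
    have summ: "summable (\<lambda>m. measure M (A m))"
    proof (rule summable_comparison_test_ev)
      show "eventually (\<lambda>m. norm (measure M (A m)) \<le> K / e^4 * inverse (real m ^ 2)) sequentially"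
        using eventually_gt_at_top[of "0::nat"] by eventually_elim (use Abound in auto)
      show "summable (\<lambda>m. K / e^4 * inverse (real m ^ 2))"
        by (intro summable_mult inverse_power_summable) auto
    qed
    have "AE \<omega> in M. eventually (\<lambda>m. \<omega> \<in> space M - A m) sequentially"
      by (rule borel_cantelli_AE1[OF Asets _ summ]) (simp add: emeasure_eq_measure)
    then show ?thesis
    proof (rule AE_mp, intro AE_I2 impI)
      fix \<omega> assume ev: "eventually (\<lambda>m. \<omega> \<in> space M - A m) sequentially" and om: "\<omega> \<in> space M"
      show "eventually (\<lambda>m. \<bar>S m \<omega> / real m\<bar> < 1 / real (Suc k)) sequentially"
        using ev eventually_gt_at_top[of "0::nat"]
      proof eventually_elim
        case (elim m)
        then have "(S m \<omega>)^4 < (real m * e)^4" using om unfolding A_def by auto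
        then have "\<bar>S m \<omega>\<bar>^4 < (real m * e)^4" by (simp add: power_even_abs)
        then have "\<bar>S m \<omega>\<bar> < real m * e"
          using e by (meson power_less_imp_less_base mult_nonneg_nonneg of_nat_0_le_iff less_imp_le)
        then show ?case using elim(2) unfolding e_def by (simp add: field_simps)
      qed
    qed
  qed
  have "AE \<omega> in M. \<forall>k. eventually (\<lambda>m. \<bar>S m \<omega> / real m\<bar> < 1 / real (Suc k)) sequentially"
    using one by (simp add: AE_all_countable)
  then show ?thesis
  proof (rule AE_mp, intro AE_I2 impI)
    fix \<omega> assume H: "\<forall>k. eventually (\<lambda>m. \<bar>S m \<omega> / real m\<bar> < 1 / real (Suc k)) sequentially"
    show "(\<lambda>m. (\<Sum>i<m. Y i \<omega>) / real m) \<longlonglongrightarrow> 0"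
    proof (rule tendstoI)
      fix r :: real assume r: "0 < r"
      obtain k where k: "inverse (real (Suc k)) < r" using reals_Archimedean[OF r] by blast
      show "eventually (\<lambda>m. dist ((\<Sum>i<m. Y i \<omega>) / real m) 0 < r) sequentially"
      proof -
        have k': "1 / real (Suc k) < r" using k by (simp add: inverse_eq_divide)
        show ?thesis
          using H[rule_format, of k] by eventually_elim (use k' in \<open>simp add: S_def dist_real_def\<close>)
      qed
    qed
  qed
qed

lemma iid_transfer:
  fixes X :: "nat \<Rightarrow> 'a \<Rightarrow> 'b::euclidean_space" and g :: "'b \<Rightarrow> real"
  assumes rv: "X i \<in> borel_measurable M" "X j \<in> borel_measurable M"
    and dist: "distr M borel (X i) = distr M borel (X j)"
    and g[measurable]: "g \<in> borel_measurable borel"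
  shows "integrable M (\<lambda>\<omega>. g (X i \<omega>)) = integrable M (\<lambda>\<omega>. g (X j \<omega>))"
    and "expectation (\<lambda>\<omega>. g (X i \<omega>)) = expectation (\<lambda>\<omega>. g (X j \<omega>))"
proof -
  show "integrable M (\<lambda>\<omega>. g (X i \<omega>)) = integrable M (\<lambda>\<omega>. g (X j \<omega>))"
    using integrable_distr_eq[OF rv(1) g] integrable_distr_eq[OF rv(2) g] dist by simp
  show "expectation (\<lambda>\<omega>. g (X i \<omega>)) = expectation (\<lambda>\<omega>. g (X j \<omega>))"
    using integral_distr[OF rv(1) g] integral_distr[OF rv(2) g] dist by simp
qed

lemma slln_iid:
  fixes X :: "nat \<Rightarrow> 'a \<Rightarrow> real"
  assumes ind: "indep_vars (\<lambda>_. borel) X UNIV"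
   and dist: "\<And>i. distr M borel (X i) = distr M borel (X 0)"
   and int4: "integrable M (\<lambda>\<omega>. (X 0 \<omega>)^4)"
  shows "AE \<omega> in M. (\<lambda>m. (\<Sum>i<m. X i \<omega>) / real m) \<longlonglongrightarrow> expectation (X 0)"
proof -
  have rv[measurable]: "\<And>i. X i \<in> borel_measurable M"
    using ind unfolding indep_vars_def by auto
  define mu where "mu = expectation (X 0)"
  define Y where "Y = (\<lambda>i \<omega>. X i \<omega> - mu)"
  have rvY[measurable]: "\<And>i. Y i \<in> borel_measurable M" unfolding Y_def by measurable
  have indY: "indep_vars (\<lambda>_. borel) Y UNIV"
    unfolding Y_def by (rule indep_vars_compose2[OF ind]) auto
  have i1: "integrable M (X 0)" using integrable_pow_le4[OF rv int4, of 1] by simp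
  have int4Y0: "integrable M (\<lambda>\<omega>. (Y 0 \<omega>)^4)"
  proof (rule Bochner_Integration.integrable_bound)
    show "integrable M (\<lambda>\<omega>. 8 * ((X 0 \<omega>)^4 + mu^4))" using int4 by simp
    show "(\<lambda>\<omega>. (Y 0 \<omega>)^4) \<in> borel_measurable M" by measurable
    show "AE \<omega> in M. norm ((Y 0 \<omega>)^4) \<le> norm (8 * ((X 0 \<omega>)^4 + mu^4))"
    proof (intro AE_I2)
      fix \<omega>
      have key: "(a - b)^4 \<le> 8 * (a^4 + b^4)" for a b :: real
      proof -
        have "0 \<le> (a + b)^2 * (7*a^2 - 10*a*b + 7*b^2)"
        proof (rule mult_nonneg_nonneg)
          show "0 \<le> 7*a^2 - 10*a*b + 7*b^2"
            using sum_squares_ge_zero[of "a-b" "a+b"] zero_le_power2[of "a - b"] zero_le_power2[of "a+b"]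
            by (simp add: power2_eq_square algebra_simps)
        qed simp
        then show ?thesis by (simp add: power2_eq_square power4_eq_xxxx algebra_simps)
      qed
      show "norm ((Y 0 \<omega>)^4) \<le> norm (8 * ((X 0 \<omega>)^4 + mu^4))"
        using key[of "X 0 \<omega>" mu] unfolding Y_def by simp
    qed
  qed
  have T: "integrable M (\<lambda>\<omega>. g (X i \<omega>)) = integrable M (\<lambda>\<omega>. g (X 0 \<omega>))"
     "expectation (\<lambda>\<omega>. g (X i \<omega>)) = expectation (\<lambda>\<omega>. g (X 0 \<omega>))"
    if "g \<in> borel_measurable borel" for g :: "real \<Rightarrow> real" and i
    using iid_transfer[of X i 0 g, OF rv[of i] rv[of 0] dist[of i] that] by auto
  have int4Y: "integrable M (\<lambda>\<omega>. (Y i \<omega>)^4)" for i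
    using T(1)[of "\<lambda>x. (x - mu)^4" i] int4Y0 unfolding Y_def by simp
  have mean0: "expectation (Y i) = 0" for i
  proof -
    have "integrable M (X i)" using T(1)[of "\<lambda>x. x" i] i1 by simp
    moreover have "expectation (X i) = mu" using T(2)[of "\<lambda>x. x" i] unfolding mu_def by simp
    ultimately show ?thesis unfolding Y_def by (simp add: prob_space)
  qed
  have C2: "expectation (\<lambda>\<omega>. (Y i \<omega>)^2) = expectation (\<lambda>\<omega>. (Y 0 \<omega>)^2)" for i
    using T(2)[of "\<lambda>x. (x - mu)^2" i] unfolding Y_def by simp
  have C4: "expectation (\<lambda>\<omega>. (Y i \<omega>)^4) \<le> expectation (\<lambda>\<omega>. (Y 0 \<omega>)^4)" for i
    using T(2)[of "\<lambda>x. (x - mu)^4" i] unfolding Y_def by simp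
  have Z: "AE \<omega> in M. (\<lambda>m. (\<Sum>i<m. Y i \<omega>) / real m) \<longlonglongrightarrow> 0"
    by (rule slln_zero_mean[OF indY int4Y mean0 C2 C4])
  then show ?thesis
  proof (rule AE_mp, intro AE_I2 impI)
    fix \<omega> assume L: "(\<lambda>m. (\<Sum>i<m. Y i \<omega>) / real m) \<longlonglongrightarrow> 0"
    have L2: "(\<lambda>m. (\<Sum>i<m. Y i \<omega>) / real m + mu) \<longlonglongrightarrow> 0 + mu"
      by (intro tendsto_add L tendsto_const)
    have ev: "eventually (\<lambda>m. (\<Sum>i<m. Y i \<omega>) / real m + mu = (\<Sum>i<m. X i \<omega>) / real m) sequentially"
      using eventually_gt_at_top[of "0::nat"]
      by eventually_elim (simp add: Y_def sum_subtractf field_simps)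
    show "(\<lambda>m. (\<Sum>i<m. X i \<omega>) / real m) \<longlonglongrightarrow> expectation (X 0)"
      using Lim_transform_eventually[OF L2 ev] unfolding mu_def by simp
  qed
qed

end


definition N1 :: "real measure" where "N1 = density lborel std_normal_density"

lemma prob_space_N1: "prob_space N1"
  unfolding N1_def by (rule prob_space_normal_density) simp

lemma sets_N1[simp, measurable_cong]: "sets N1 = sets borel"
  unfolding N1_def by simp

lemma space_N1[simp]: "space N1 = UNIV"
  unfolding N1_def by simp

lemma inner_Phi:
  fixes b :: "'a::euclidean_space"
  assumes "b \<in> Basis"
  shows "(\<Sum>c\<in>Basis. f c *\<^sub>R c) \<bullet> b = f b"
proof -
  have "(\<Sum>c\<in>Basis. f c *\<^sub>R c) \<bullet> b = (\<Sum>c\<in>Basis. f c * (c \<bullet> b))"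
    by (simp add: inner_sum_left)
  also have "\<dots> = (\<Sum>c\<in>Basis. if c = b then f c else 0)"
    using assms by (intro sum.cong) (auto simp: inner_Basis)
  also have "\<dots> = f b" using assms by simp
  finally show ?thesis .
qed

lemma norm_Phi_sq:
  "(norm (\<Sum>c\<in>(Basis::'a::euclidean_space set). f c *\<^sub>R c))\<^sup>2 = (\<Sum>b\<in>(Basis::'a set). (f b)\<^sup>2)"
proof -
  have "(norm (\<Sum>c\<in>(Basis::'a set). f c *\<^sub>R c))\<^sup>2 =
    (\<Sum>c\<in>(Basis::'a set). f c *\<^sub>R c) \<bullet> (\<Sum>c\<in>(Basis::'a set). f c *\<^sub>R c)"
    by (simp add: power2_norm_eq_inner)
  also have "\<dots> = (\<Sum>b\<in>(Basis::'a set). ((\<Sum>c\<in>(Basis::'a set). f c *\<^sub>R c) \<bullet> b) * ((\<Sum>c\<in>(Basis::'a set). f c *\<^sub>R c) \<bullet> b))"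
    by (rule euclidean_inner)
  also have "\<dots> = (\<Sum>b\<in>(Basis::'a set). (f b)\<^sup>2)"
    by (intro sum.cong refl) (simp add: inner_Phi power2_eq_square)
  finally show ?thesis .
qed

lemma std_density_prod:
  "ennreal ((2 * pi) powr (- real DIM('a) / 2) * exp (- (norm (\<Sum>c\<in>(Basis::'a::euclidean_space set). f c *\<^sub>R c))\<^sup>2 / 2))
   = (\<Prod>b\<in>(Basis::'a set). ennreal (std_normal_density (f b)))"
proof -
  have P1: "(2 * pi) powr (- real DIM('a) / 2) = (1 / sqrt (2 * pi)) ^ DIM('a)"
  proof -
    have "(2 * pi) powr (- real DIM('a) / 2) = ((2 * pi) powr (- 1 / 2)) powr (real DIM('a))"
      unfolding powr_powr by (simp add: field_simps)
    also have "\<dots> = ((2 * pi) powr (- 1 / 2)) ^ DIM('a)"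
      by (rule powr_realpow) simp
    also have "(2 * pi) powr (- 1 / 2) = 1 / sqrt (2 * pi)"
    proof -
      have "(2 * pi) powr (- 1 / 2) = inverse ((2 * pi) powr (1 / 2))"
        by (simp add: powr_minus[symmetric])
      also have "(2 * pi) powr (1 / 2) = sqrt (2 * pi)"
        by (simp add: powr_half_sqrt)
      finally show ?thesis by (simp add: inverse_eq_divide)
    qed
    finally show ?thesis .
  qed
  have P2: "exp (- (norm (\<Sum>c\<in>(Basis::'a set). f c *\<^sub>R c))\<^sup>2 / 2) = (\<Prod>b\<in>(Basis::'a set). exp (- (f b)\<^sup>2 / 2))"
    unfolding norm_Phi_sq by (simp add: exp_sum[symmetric] sum_divide_distrib[symmetric] sum_negf)
  have P3: "(\<Prod>b\<in>(Basis::'a set). std_normal_density (f b)) = (1 / sqrt (2 * pi)) ^ DIM('a) * (\<Prod>b\<in>(Basis::'a set). exp (- (f b)\<^sup>2 / 2))"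
    unfolding std_normal_density_def prod.distrib by (simp add: prod_constant)
  show ?thesis
    unfolding P1 P2 P3[symmetric] by (subst prod_ennreal) auto
qed


lemma PiM_N1_eq:
  assumes fin: "finite I"
  shows "density (\<Pi>\<^sub>M i\<in>I. lborel) (\<lambda>f. \<Prod>i\<in>I. ennreal (std_normal_density (f i))) = (\<Pi>\<^sub>M i\<in>I. N1)"
proof -
  interpret P: product_sigma_finite "\<lambda>_. N1"
    unfolding product_sigma_finite_def using prob_space_N1 prob_space_imp_sigma_finite by blast
  interpret L: product_sigma_finite "\<lambda>_. lborel :: real measure"
    unfolding product_sigma_finite_def using sigma_finite_lborel by blast
  show ?thesis
  proof (rule P.PiM_eqI[OF fin])
    show "sets (density (\<Pi>\<^sub>M i\<in>I. lborel) (\<lambda>f. \<Prod>i\<in>I. ennreal (std_normal_density (f i)))) = sets (\<Pi>\<^sub>M i\<in>I. N1)"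
      by (simp cong: sets_PiM_cong)
  next
    fix A assume A: "\<And>i. i \<in> I \<Longrightarrow> A i \<in> sets N1"
    have Ab: "\<And>i. i \<in> I \<Longrightarrow> A i \<in> sets borel" using A by simp
    have PiEs: "Pi\<^sub>E I A \<in> sets (\<Pi>\<^sub>M i\<in>I. lborel)"
      using Ab by (intro sets_PiM_I_finite fin) auto
    have "emeasure (density (\<Pi>\<^sub>M i\<in>I. lborel) (\<lambda>f. \<Prod>i\<in>I. ennreal (std_normal_density (f i)))) (Pi\<^sub>E I A)
        = (\<integral>\<^sup>+ f. (\<Prod>i\<in>I. ennreal (std_normal_density (f i))) * indicator (Pi\<^sub>E I A) f \<partial>(\<Pi>\<^sub>M i\<in>I. lborel))"
      by (rule emeasure_density[OF _ PiEs]) measurable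
    also have "\<dots> = (\<integral>\<^sup>+ f. (\<Prod>i\<in>I. ennreal (std_normal_density (f i)) * indicator (A i) (f i)) \<partial>(\<Pi>\<^sub>M i\<in>I. lborel))"
    proof (rule nn_integral_cong)
      fix f :: "_ \<Rightarrow> real" assume f: "f \<in> space (\<Pi>\<^sub>M i\<in>I. lborel)"
      have "indicator (Pi\<^sub>E I A) f = (\<Prod>i\<in>I. indicator (A i) (f i) :: ennreal)"
      proof (cases "\<forall>i\<in>I. f i \<in> A i")
        case True
        then have "f \<in> Pi\<^sub>E I A" using f by (auto simp: space_PiM PiE_def)
        then show ?thesis using True by (simp add: indicator_def)
      next
        case False
        then obtain j where j: "j \<in> I" "f j \<notin> A j" by auto
        then have "f \<notin> Pi\<^sub>E I A" by auto
        moreover have "(\<Prod>i\<in>I. indicator (A i) (f i) :: ennreal) = 0"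
          using j fin by (intro prod_zero) (auto intro!: bexI[of _ j])
        ultimately show ?thesis by simp
      qed
      then show "(\<Prod>i\<in>I. ennreal (std_normal_density (f i))) * indicator (Pi\<^sub>E I A) f
          = (\<Prod>i\<in>I. ennreal (std_normal_density (f i)) * indicator (A i) (f i))"
        by (simp add: prod.distrib)
    qed
    also have "\<dots> = (\<Prod>i\<in>I. \<integral>\<^sup>+ x. ennreal (std_normal_density x) * indicator (A i) x \<partial>lborel)"
      by (rule L.product_nn_integral_prod[OF fin]) (use Ab in measurable)
    also have "\<dots> = (\<Prod>i\<in>I. emeasure N1 (A i))"
      unfolding N1_def using Ab by (intro prod.cong refl) (simp add: emeasure_density)
    finally show "emeasure (density (\<Pi>\<^sub>M i\<in>I. lborel) (\<lambda>f. \<Prod>i\<in>I. ennreal (std_normal_density (f i)))) (Pi\<^sub>E I A)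
        = (\<Prod>i\<in>I. emeasure N1 (A i))" .
  qed
qed


lemma std_normal_vec_eq:
  "(std_normal_vec :: 'a::euclidean_space measure) =
     distr (\<Pi>\<^sub>M b\<in>(Basis::'a set). N1) borel (\<lambda>f. \<Sum>b\<in>Basis. f b *\<^sub>R b)"
proof -
  let ?PL = "\<Pi>\<^sub>M b\<in>(Basis::'a set). (lborel :: real measure)"
  let ?Phi = "\<lambda>f. \<Sum>b\<in>(Basis::'a set). f b *\<^sub>R b"
  let ?g = "\<lambda>x::'a. ennreal ((2 * pi) powr (- real DIM('a) / 2) * exp (- (norm x)\<^sup>2 / 2))"
  have m: "?Phi \<in> measurable ?PL borel"
    by (intro borel_measurable_sum borel_measurable_scaleR borel_measurable_const measurable_component_singleton) auto
  have "(std_normal_vec :: 'a measure) = density (distr ?PL borel ?Phi) ?g"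
    unfolding std_normal_vec_def by (subst lborel_eq[where 'a='a]) (rule refl)
  also have "\<dots> = distr (density ?PL (\<lambda>f. ?g (?Phi f))) borel ?Phi"
    by (rule density_distr[OF _ m]) measurable
  also have "density ?PL (\<lambda>f. ?g (?Phi f)) = density ?PL (\<lambda>f. \<Prod>b\<in>Basis. ennreal (std_normal_density (f b)))"
    apply (rule density_cong)
      apply (rule measurable_compose[OF m], measurable)
     apply measurable
    apply (rule AE_I2, rule std_density_prod)
    done
  also have "\<dots> = (\<Pi>\<^sub>M b\<in>(Basis::'a set). N1)"
    by (rule PiM_N1_eq) simp
  finally show ?thesis .
qed


lemma inner_std_normal:
  fixes w :: "'a::euclidean_space"
  assumes w: "w \<noteq> 0"
  shows "distributed (std_normal_vec :: 'a measure) lborel (\<lambda>n. n \<bullet> w) (normal_density 0 (norm w))"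
proof -
  define Q where "Q = (\<Pi>\<^sub>M b\<in>(Basis::'a set). N1)"
  interpret Q: prob_space Q unfolding Q_def by (rule prob_space_PiM) (rule prob_space_N1)
  have spQ: "space Q = Pi\<^sub>E Basis (\<lambda>_. UNIV)" unfolding Q_def by (simp add: space_PiM)
  have rvX[measurable]: "(\<lambda>f. f b) \<in> borel_measurable Q" if "b \<in> Basis" for b
  proof -
    have "(\<lambda>f. f b) \<in> measurable Q N1" unfolding Q_def using that by (rule measurable_component_singleton)
    moreover have "measurable Q N1 = measurable Q borel" by (rule measurable_cong_sets) simp_all
    ultimately show ?thesis by simp
  qed
  have distrX: "distr Q borel (\<lambda>f. f b) = N1" if "b \<in> Basis" for b
  proof -
    have "distr Q N1 (\<lambda>f. f b) = N1"
      unfolding Q_def by (rule distr_PiM_component[OF prob_space_N1 that])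
    moreover have "distr Q borel (\<lambda>f. f b) = distr Q N1 (\<lambda>f. f b)"
      by (rule distr_cong) auto
    ultimately show ?thesis by simp
  qed
  have indX: "Q.indep_vars (\<lambda>_. borel) (\<lambda>b f. f b) Basis"
  proof (subst Q.indep_vars_iff_distr_eq_PiM')
    show "Basis \<noteq> {}" by simp
    show "Q.random_variable borel (\<lambda>f. f b)" if "b \<in> Basis" for b :: 'a using rvX[OF that] by simp
    have "distr Q (\<Pi>\<^sub>M b\<in>Basis. borel) (\<lambda>x. \<lambda>b\<in>Basis. x b) = distr Q Q (\<lambda>x. x)"
      by (rule distr_cong) (auto simp: Q_def space_PiM PiE_def extensional_restrict cong: sets_PiM_cong)
    also have "\<dots> = Q" by (rule distr_id)
    also have "Q = (\<Pi>\<^sub>M b\<in>Basis. distr Q borel (\<lambda>f. f b))"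
      unfolding Q_def by (rule PiM_cong) (auto simp: distrX[unfolded Q_def])
    finally show "distr Q (\<Pi>\<^sub>M b\<in>Basis. borel) (\<lambda>x. \<lambda>b\<in>Basis. x b) = (\<Pi>\<^sub>M b\<in>Basis. distr Q borel (\<lambda>f. f b))" .
  qed
  define I where "I = {b\<in>(Basis::'a set). b \<bullet> w \<noteq> 0}"
  have I: "finite I" "I \<noteq> {}" "I \<subseteq> Basis"
    using w euclidean_all_zero_iff[of w] by (auto simp: I_def inner_commute)
  have indY: "Q.indep_vars (\<lambda>_. borel) (\<lambda>b f. (b \<bullet> w) * f b) I"
    using Q.indep_vars_compose2[OF Q.indep_vars_subset[OF indX I(3)], of "\<lambda>b x. (b \<bullet> w) * x" "\<lambda>_. borel"]
    by auto
  have distX: "distributed Q lborel (\<lambda>f. f b) (normal_density 0 1)" if "b \<in> Basis" for b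
  proof -
    have "distr Q lborel (\<lambda>f. f b) = distr Q borel (\<lambda>f. f b)" by (rule distr_cong) auto
    then show ?thesis
      unfolding distributed_def using distrX[OF that] rvX[OF that] by (simp add: N1_def)
  qed
  have distY: "distributed Q lborel (\<lambda>f. (b \<bullet> w) * f b) (normal_density 0 \<bar>b \<bullet> w\<bar>)" if "b \<in> I" for b
    using Q.normal_density_affine[OF distX, of b "b \<bullet> w" 0] that I(3) by (auto simp: I_def)
  have distS: "distributed Q lborel (\<lambda>f. \<Sum>b\<in>I. (b \<bullet> w) * f b) (normal_density (\<Sum>b\<in>I. 0) (sqrt (\<Sum>b\<in>I. \<bar>b \<bullet> w\<bar>\<^sup>2)))"
    by (rule Q.sum_indep_normal[OF I(1) I(2) indY]) (use distY in \<open>auto simp: I_def\<close>)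
  have nw: "sqrt (\<Sum>b\<in>I. \<bar>b \<bullet> w\<bar>\<^sup>2) = norm w"
  proof -
    have "(\<Sum>b\<in>I. \<bar>b \<bullet> w\<bar>\<^sup>2) = (\<Sum>b\<in>I. (w \<bullet> b) * (w \<bullet> b))"
      by (simp add: power2_eq_square inner_commute)
    also have "\<dots> = (\<Sum>b\<in>Basis. (w \<bullet> b) * (w \<bullet> b))"
      by (rule sum.mono_neutral_left) (auto simp: I_def inner_commute)
    also have "\<dots> = w \<bullet> w" by (rule euclidean_inner[symmetric])
    finally show ?thesis by (simp add: norm_eq_sqrt_inner)
  qed
  have Seq: "(\<Sum>b\<in>Basis. f b *\<^sub>R b) \<bullet> w = (\<Sum>b\<in>I. (b \<bullet> w) * f b)" for f :: "'a \<Rightarrow> real"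
  proof -
    have "(\<Sum>b\<in>Basis. f b *\<^sub>R b) \<bullet> w = (\<Sum>b\<in>Basis. (b \<bullet> w) * f b)"
      by (simp add: inner_sum_left mult.commute)
    also have "\<dots> = (\<Sum>b\<in>I. (b \<bullet> w) * f b)"
      by (rule sum.mono_neutral_right) (auto simp: I_def)
    finally show ?thesis .
  qed
  have PhiM: "(\<lambda>f. \<Sum>b\<in>(Basis::'a set). f b *\<^sub>R b) \<in> borel_measurable Q"
    by (intro borel_measurable_sum borel_measurable_scaleR borel_measurable_const rvX)
  have "distr (std_normal_vec :: 'a measure) lborel (\<lambda>n. n \<bullet> w)
      = distr (distr Q borel (\<lambda>f. \<Sum>b\<in>Basis. f b *\<^sub>R b)) lborel (\<lambda>n. n \<bullet> w)"
    unfolding std_normal_vec_eq Q_def ..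
  also have "\<dots> = distr Q lborel ((\<lambda>n. n \<bullet> w) \<circ> (\<lambda>f. \<Sum>b\<in>Basis. f b *\<^sub>R b))"
    by (rule distr_distr) (auto intro: PhiM)
  also have "\<dots> = distr Q lborel (\<lambda>f. \<Sum>b\<in>I. (b \<bullet> w) * f b)"
    by (rule distr_cong) (auto simp: Seq)
  finally show ?thesis
    using distS unfolding distributed_def nw by (simp add: std_normal_vec_def)
qed


lemma Phi_meas_N1:
  "(\<lambda>f. \<Sum>b\<in>(Basis::'a::euclidean_space set). f b *\<^sub>R b) \<in> borel_measurable (\<Pi>\<^sub>M b\<in>(Basis::'a set). N1)"
proof -
  have rvX: "(\<lambda>f. f b) \<in> borel_measurable (\<Pi>\<^sub>M b\<in>(Basis::'a set). N1)" if "b \<in> Basis" for b :: 'a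
  proof -
    have "(\<lambda>f. f b) \<in> measurable (\<Pi>\<^sub>M b\<in>(Basis::'a set). N1) N1" using that by (rule measurable_component_singleton)
    moreover have "measurable (\<Pi>\<^sub>M b\<in>(Basis::'a set). N1) N1 = measurable (\<Pi>\<^sub>M b\<in>(Basis::'a set). N1) borel"
      by (rule measurable_cong_sets) simp_all
    ultimately show ?thesis by simp
  qed
  show ?thesis
    by (intro borel_measurable_sum borel_measurable_scaleR borel_measurable_const rvX)
qed

lemma prob_space_std: "prob_space (std_normal_vec :: 'a::euclidean_space measure)"
  unfolding std_normal_vec_eq
  by (intro prob_space.prob_space_distr prob_space_PiM prob_space_N1 Phi_meas_N1)

lemma sets_std[simp, measurable_cong]: "sets (std_normal_vec :: 'a::euclidean_space measure) = sets borel"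
  unfolding std_normal_vec_def by simp

lemma space_std[simp]: "space (std_normal_vec :: 'a::euclidean_space measure) = UNIV"
  unfolding std_normal_vec_def by simp

lemma gauss_transfer:
  fixes w :: "'a::euclidean_space" and h :: "real \<Rightarrow> real"
  assumes w: "w \<noteq> 0" and h[measurable]: "h \<in> borel_measurable borel"
  shows "integrable (std_normal_vec :: 'a measure) (\<lambda>n. h (n \<bullet> w)) \<longleftrightarrow> integrable lborel (\<lambda>x. normal_density 0 (norm w) x * h x)"
    and "integral\<^sup>L (std_normal_vec :: 'a measure) (\<lambda>n. h (n \<bullet> w)) = integral\<^sup>L lborel (\<lambda>x. normal_density 0 (norm w) x * h x)"
  using distributed_integrable[OF inner_std_normal[OF w], of h] distributed_integral[OF inner_std_normal[OF w], of h]
  by auto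

lemma gauss_abs:
  fixes w :: "'a::euclidean_space"
  shows "integrable (std_normal_vec :: 'a measure) (\<lambda>n. \<bar>n \<bullet> w\<bar>) \<and>
    integral\<^sup>L (std_normal_vec :: 'a measure) (\<lambda>n. \<bar>n \<bullet> w\<bar>) = norm w * sqrt (2 / pi)"
proof (cases "w = 0")
  case True
  then show ?thesis by simp
next
  case False
  have pos: "0 < norm w" using False by simp
  have hb: "has_bochner_integral lborel (\<lambda>x. normal_density 0 (norm w) x * \<bar>x - 0\<bar>^(2 * 0 + 1)) (2^0 * (norm w)^(2 * 0 + 1) * fact 0 * sqrt (2 / pi))"
    by (rule normal_moment_abs_odd[OF pos])
  then have "integrable lborel (\<lambda>x. normal_density 0 (norm w) x * \<bar>x\<bar>)" 
    and "integral\<^sup>L lborel (\<lambda>x. normal_density 0 (norm w) x * \<bar>x\<bar>) = norm w * sqrt (2 / pi)"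
    using hb by (simp_all add: has_bochner_integral_iff)
  then show ?thesis using gauss_transfer[OF False, of abs] by simp
qed

lemma gauss_lin:
  fixes w :: "'a::euclidean_space"
  shows "integrable (std_normal_vec :: 'a measure) (\<lambda>n. n \<bullet> w) \<and>
    integral\<^sup>L (std_normal_vec :: 'a measure) (\<lambda>n. n \<bullet> w) = 0"
proof (cases "w = 0")
  case True
  then show ?thesis by simp
next
  case False
  have pos: "0 < norm w" using False by simp
  have "integrable lborel (\<lambda>x. normal_density 0 (norm w) x * x)" 
    and "integral\<^sup>L lborel (\<lambda>x. normal_density 0 (norm w) x * x) = 0"
    using integrable_normal_moment_nz_1[OF pos] integral_normal_moment_nz_1[OF pos] by auto
  then show ?thesis using gauss_transfer[OF False, of "\<lambda>x. x"] by simp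
qed

lemma gauss_4:
  fixes w :: "'a::euclidean_space"
  shows "integrable (std_normal_vec :: 'a measure) (\<lambda>n. (n \<bullet> w)^4)"
proof (cases "w = 0")
  case True
  then show ?thesis by simp
next
  case False
  have pos: "0 < norm w" using False by simp
  have "integrable lborel (\<lambda>x. normal_density 0 (norm w) x * x^4)" 
    using integrable_normal_moment[OF pos, of 0 4] by simp
  then show ?thesis using gauss_transfer[OF False, of "\<lambda>x. x^4"] by simp
qed

lemma gauss_null:
  fixes w :: "'a::euclidean_space"
  assumes w: "w \<noteq> 0"
  shows "AE n in (std_normal_vec :: 'a measure). n \<bullet> w \<noteq> 0"
proof -
  have "emeasure (std_normal_vec :: 'a measure) ((\<lambda>n. n \<bullet> w) -` {0} \<inter> space std_normal_vec)
      = (\<integral>\<^sup>+x. ennreal (normal_density 0 (norm w) x) * indicator {0} x \<partial>lborel)"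
    by (rule distributed_emeasure[OF inner_std_normal[OF w]]) simp
  also have "\<dots> = 0"
  proof -
    have "AE x in lborel. ennreal (normal_density 0 (norm w) x) * indicator {0} x = 0"
      using AE_lborel_singleton[of 0] by eventually_elim simp
    then show ?thesis by (simp add: nn_integral_0_iff_AE)
  qed
  finally have "{n \<in> space std_normal_vec. \<not> n \<bullet> w \<noteq> 0} \<in> null_sets (std_normal_vec :: 'a measure)"
    by (auto simp: null_sets_def vimage_def Int_def)
  then show ?thesis by (subst AE_iff_null) auto
qed

lemma gauss_half:
  fixes w :: "'a::euclidean_space"
  assumes w: "w \<noteq> 0"
  shows "integral\<^sup>L (std_normal_vec :: 'a measure) (\<lambda>n. indicator {0..} (n \<bullet> w) :: real) = 1 / 2"
proof -
  let ?p = "normal_density 0 (norm w)"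
  have pos: "0 < norm w" using w by simp
  have int1: "integrable lborel (\<lambda>x. ?p x * indicator {0..} x :: real)"
    using integrable_mult_indicator[of "{0..}" lborel ?p] integrable_normal_density[OF pos] by (simp add: mult.commute)
  have int2: "integrable lborel (\<lambda>x. ?p x * indicator {..0} x :: real)"
    using integrable_mult_indicator[of "{..0}" lborel ?p] integrable_normal_density[OF pos] by (simp add: mult.commute)
  have sym: "integral\<^sup>L lborel (\<lambda>x. ?p x * indicator {0..} x :: real) = integral\<^sup>L lborel (\<lambda>x. ?p x * indicator {..0} x)"
  proof -
    have "integral\<^sup>L lborel (\<lambda>x. ?p x * indicator {0..} x :: real) = \<bar>- 1\<bar> *\<^sub>R integral\<^sup>L lborel (\<lambda>x. ?p (0 + - 1 * x) * indicator {0..} (0 + - 1 * x) :: real)"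
      by (rule lborel_integral_real_affine) simp
    also have "\<dots> = integral\<^sup>L lborel (\<lambda>x. ?p x * indicator {..0} x)"
    proof -
      have "\<And>x. ?p (0 + - 1 * x) * indicator {0..} (0 + - 1 * x) = ?p x * (indicator {..0} x :: real)"
        by (auto simp: normal_density_def indicator_def)
      then show ?thesis by simp
    qed
    finally show ?thesis .
  qed
  have "integral\<^sup>L lborel (\<lambda>x. ?p x * indicator {0..} x :: real) + integral\<^sup>L lborel (\<lambda>x. ?p x * indicator {..0} x)
      = integral\<^sup>L lborel (\<lambda>x. ?p x * indicator {0..} x + ?p x * indicator {..0} x)"
    using int1 int2 by simp
  also have "\<dots> = integral\<^sup>L lborel ?p"
  proof (rule integral_cong_AE)
    show "AE x in lborel. ?p x * indicator {0..} x + ?p x * indicator {..0} x = ?p x"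
      using AE_lborel_singleton[of 0] by eventually_elim (auto simp: indicator_def)
  qed auto
  also have "\<dots> = 1" using integral_normal_density[OF pos] by simp
  finally have "integral\<^sup>L lborel (\<lambda>x. ?p x * indicator {0..} x :: real) = 1 / 2" using sym by simp
  then show ?thesis using gauss_transfer(2)[OF w, of "indicator {0..}"] by simp
qed


lemma norm_diff_quot:
  fixes v c :: "'a::real_inner"
  assumes v: "v \<noteq> 0" and t: "0 < t"
  shows "(norm (v + t *\<^sub>R c) - norm v) / t = (2 * (v \<bullet> c) + t * (norm c)\<^sup>2) / (norm (v + t *\<^sub>R c) + norm v)"
proof -
  have pos: "0 < norm (v + t *\<^sub>R c) + norm v" using v by (simp add: add_nonneg_pos)
  have sq: "(norm (v + t *\<^sub>R c))\<^sup>2 = (norm v)\<^sup>2 + t * (2 * (v \<bullet> c) + t * (norm c)\<^sup>2)"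
    by (simp add: power2_norm_eq_inner inner_add_left inner_add_right inner_commute algebra_simps)
  have "(norm (v + t *\<^sub>R c) - norm v) * (norm (v + t *\<^sub>R c) + norm v) = (norm (v + t *\<^sub>R c))\<^sup>2 - (norm v)\<^sup>2"
    by (simp add: power2_eq_square algebra_simps)
  also have "\<dots> = t * (2 * (v \<bullet> c) + t * (norm c)\<^sup>2)" using sq by simp
  finally have "(norm (v + t *\<^sub>R c) - norm v) * (norm (v + t *\<^sub>R c) + norm v) = t * (2 * (v \<bullet> c) + t * (norm c)\<^sup>2)" .
  then show ?thesis using pos t by (simp add: field_simps)
qed

lemma gauss_sgn:
  fixes v c :: "'a::euclidean_space"
  assumes v: "v \<noteq> 0"
  shows "integral\<^sup>L (std_normal_vec :: 'a measure) (\<lambda>n. (n \<bullet> c) * sgn (n \<bullet> v)) = sqrt (2 / pi) * (v \<bullet> c) / norm v"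
proof -
  interpret S: prob_space "std_normal_vec :: 'a measure" by (rule prob_space_std)
  define t where "t = (\<lambda>k::nat. inverse (real (Suc k)))"
  have tpos: "0 < t k" for k unfolding t_def by simp
  have tlim: "t \<longlonglongrightarrow> 0" unfolding t_def by (rule LIMSEQ_inverse_real_of_nat)
  define s where "s = (\<lambda>k (n::'a). (\<bar>n \<bullet> (v + t k *\<^sub>R c)\<bar> - \<bar>n \<bullet> v\<bar>) / t k)"
  have lim1: "(\<lambda>k. integral\<^sup>L std_normal_vec (s k)) \<longlonglongrightarrow> integral\<^sup>L (std_normal_vec :: 'a measure) (\<lambda>n. (n \<bullet> c) * sgn (n \<bullet> v))"
  proof (rule integral_dominated_convergence[where w="\<lambda>n. \<bar>n \<bullet> c\<bar>"])
    show "(\<lambda>n. (n \<bullet> c) * sgn (n \<bullet> v)) \<in> borel_measurable (std_normal_vec :: 'a measure)" by measurable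
    show "s k \<in> borel_measurable (std_normal_vec :: 'a measure)" for k unfolding s_def by measurable
    show "integrable (std_normal_vec :: 'a measure) (\<lambda>n. \<bar>n \<bullet> c\<bar>)" using gauss_abs by blast
    show "AE n in std_normal_vec. (\<lambda>k. s k n) \<longlonglongrightarrow> (n \<bullet> c) * sgn (n \<bullet> v)"
      using gauss_null[OF v]
    proof eventually_elim
      case (elim n)
      note nz = elim
      have "(\<lambda>k. t k * \<bar>n \<bullet> c\<bar>) \<longlonglongrightarrow> 0 * \<bar>n \<bullet> c\<bar>" by (intro tendsto_mult tlim tendsto_const)
      then have "eventually (\<lambda>k. t k * \<bar>n \<bullet> c\<bar> < \<bar>n \<bullet> v\<bar>) sequentially"
        using elim by (intro order_tendstoD) auto
      then have "eventually (\<lambda>k. s k n = (n \<bullet> c) * sgn (n \<bullet> v)) sequentially"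
      proof eventually_elim
        case (elim k)
        have eq: "n \<bullet> (v + t k *\<^sub>R c) = n \<bullet> v + t k * (n \<bullet> c)" by (simp add: inner_add_right)
        have tb: "\<bar>t k * (n \<bullet> c)\<bar> < \<bar>n \<bullet> v\<bar>" using elim tpos[of k] by (simp add: abs_mult)
        show ?case
        proof (cases "n \<bullet> v > 0")
          case True
          then have "\<bar>n \<bullet> v + t k * (n \<bullet> c)\<bar> = n \<bullet> v + t k * (n \<bullet> c)" using tb by auto
          then show ?thesis using True tpos[of k] unfolding s_def eq by simp
        next
          case False
          then have neg: "n \<bullet> v < 0" using nz by auto
          then have "\<bar>n \<bullet> v + t k * (n \<bullet> c)\<bar> = - (n \<bullet> v + t k * (n \<bullet> c))" using tb by auto
          then show ?thesis using neg tpos[of k] unfolding s_def eq by (simp add: field_simps)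
        qed
      qed
      then show ?case by (rule tendsto_eventually)
    qed
    show "AE n in std_normal_vec. norm (s k n) \<le> \<bar>n \<bullet> c\<bar>" for k
    proof (intro AE_I2)
      fix n :: 'a
      have eq: "n \<bullet> (v + t k *\<^sub>R c) = n \<bullet> v + t k * (n \<bullet> c)" by (simp add: inner_add_right)
      have "\<bar>\<bar>n \<bullet> v + t k * (n \<bullet> c)\<bar> - \<bar>n \<bullet> v\<bar>\<bar> \<le> t k * \<bar>n \<bullet> c\<bar>"
      proof -
        have "\<bar>\<bar>n \<bullet> v + t k * (n \<bullet> c)\<bar> - \<bar>n \<bullet> v\<bar>\<bar> \<le> \<bar>(n \<bullet> v + t k * (n \<bullet> c)) - n \<bullet> v\<bar>"
          by (rule abs_triangle_ineq3)
        then show ?thesis using tpos[of k] by (simp add: abs_mult)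
      qed
      then show "norm (s k n) \<le> \<bar>n \<bullet> c\<bar>"
        using tpos[of k] unfolding s_def eq by (simp add: abs_div pos_divide_le_eq mult.commute)
    qed
  qed
  have ints: "integral\<^sup>L std_normal_vec (s k) = sqrt (2 / pi) * ((norm (v + t k *\<^sub>R c) - norm v) / t k)" for k
  proof -
    have "integral\<^sup>L std_normal_vec (s k) = (integral\<^sup>L (std_normal_vec :: 'a measure) (\<lambda>n. \<bar>n \<bullet> (v + t k *\<^sub>R c)\<bar>) - integral\<^sup>L (std_normal_vec :: 'a measure) (\<lambda>n. \<bar>n \<bullet> v\<bar>)) / t k"
      unfolding s_def using gauss_abs[of "v + t k *\<^sub>R c"] gauss_abs[of v] by simp
    then show ?thesis using gauss_abs[of "v + t k *\<^sub>R c"] gauss_abs[of v] by (simp add: field_simps)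
  qed
  have lim2: "(\<lambda>k. integral\<^sup>L std_normal_vec (s k)) \<longlonglongrightarrow> sqrt (2 / pi) * ((2 * (v \<bullet> c) + 0 * (norm c)\<^sup>2) / (norm (v + 0 *\<^sub>R c) + norm v))"
  proof -
    have "(\<lambda>k. sqrt (2 / pi) * ((2 * (v \<bullet> c) + t k * (norm c)\<^sup>2) / (norm (v + t k *\<^sub>R c) + norm v)))
       \<longlonglongrightarrow> sqrt (2 / pi) * ((2 * (v \<bullet> c) + 0 * (norm c)\<^sup>2) / (norm (v + 0 *\<^sub>R c) + norm v))"
      using v by (intro tendsto_intros tlim) auto
    moreover have "integral\<^sup>L std_normal_vec (s k) = sqrt (2 / pi) * ((2 * (v \<bullet> c) + t k * (norm c)\<^sup>2) / (norm (v + t k *\<^sub>R c) + norm v))" for k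
      unfolding ints norm_diff_quot[OF v tpos] ..
    ultimately show ?thesis by simp
  qed
  have "integral\<^sup>L (std_normal_vec :: 'a measure) (\<lambda>n. (n \<bullet> c) * sgn (n \<bullet> v)) = sqrt (2 / pi) * ((2 * (v \<bullet> c) + 0 * (norm c)\<^sup>2) / (norm (v + 0 *\<^sub>R c) + norm v))"
    using LIMSEQ_unique[OF lim1 lim2] .
  then show ?thesis using v by simp
qed

lemma gauss_pos:
  fixes v c :: "'a::euclidean_space"
  assumes v: "v \<noteq> 0"
  shows "integrable (std_normal_vec :: 'a measure) (\<lambda>n. (n \<bullet> c) * indicator {0..} (n \<bullet> v))"
    and "integral\<^sup>L (std_normal_vec :: 'a measure) (\<lambda>n. (n \<bullet> c) * indicator {0..} (n \<bullet> v)) = sqrt (2 / pi) * (v \<bullet> c) / (2 * norm v)"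
proof -
  interpret S: prob_space "std_normal_vec :: 'a measure" by (rule prob_space_std)
  have iT: "integrable (std_normal_vec :: 'a measure) (\<lambda>n. n \<bullet> c)" using gauss_lin by blast
  show I: "integrable (std_normal_vec :: 'a measure) (\<lambda>n. (n \<bullet> c) * indicator {0..} (n \<bullet> v))"
    by (rule Bochner_Integration.integrable_bound[OF gauss_abs[THEN conjunct1, of c]]) (auto simp: indicator_def)
  have iS: "integrable (std_normal_vec :: 'a measure) (\<lambda>n. (n \<bullet> c) * sgn (n \<bullet> v))"
    by (rule Bochner_Integration.integrable_bound[OF gauss_abs[THEN conjunct1, of c]]) (auto simp: abs_mult abs_sgn_eq)
  have "integral\<^sup>L (std_normal_vec :: 'a measure) (\<lambda>n. (n \<bullet> c) * indicator {0..} (n \<bullet> v))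
      = integral\<^sup>L (std_normal_vec :: 'a measure) (\<lambda>n. ((n \<bullet> c) * sgn (n \<bullet> v) + n \<bullet> c) / 2)"
  proof (rule integral_cong_AE)
    show "AE n in std_normal_vec. (n \<bullet> c) * indicator {0..} (n \<bullet> v) = ((n \<bullet> c) * sgn (n \<bullet> v) + n \<bullet> c) / 2"
      using gauss_null[OF v] by eventually_elim (auto simp: indicator_def sgn_if)
  qed auto
  also have "\<dots> = (integral\<^sup>L (std_normal_vec :: 'a measure) (\<lambda>n. (n \<bullet> c) * sgn (n \<bullet> v)) + integral\<^sup>L (std_normal_vec :: 'a measure) (\<lambda>n. n \<bullet> c)) / 2"
    using iT iS by simp
  also have "\<dots> = sqrt (2 / pi) * (v \<bullet> c) / (2 * norm v)"
    using gauss_sgn[OF v, of c] gauss_lin[of c] by simp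
  finally show "integral\<^sup>L (std_normal_vec :: 'a measure) (\<lambda>n. (n \<bullet> c) * indicator {0..} (n \<bullet> v)) = sqrt (2 / pi) * (v \<bullet> c) / (2 * norm v)" .
qed



lemma tendsto_componentwise_Basis:
  fixes x :: "nat \<Rightarrow> 'a::euclidean_space"
  assumes "\<And>b. b \<in> Basis \<Longrightarrow> (\<lambda>m. x m \<bullet> b) \<longlonglongrightarrow> L \<bullet> b"
  shows "x \<longlonglongrightarrow> L"
proof -
  have "(\<lambda>m. \<Sum>b\<in>Basis. (x m \<bullet> b) *\<^sub>R b) \<longlonglongrightarrow> (\<Sum>b\<in>Basis. (L \<bullet> b) *\<^sub>R b)"
    using assms by (intro tendsto_sum tendsto_scaleR tendsto_const) auto
  then show ?thesis by (simp add: euclidean_representation)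
qed

lemma avg_filter:
  fixes g :: "nat \<Rightarrow> 'a::euclidean_space"
  shows "((1 / real (card {i\<in>{..<m}. P i})) *\<^sub>R (\<Sum>i\<in>{i\<in>{..<m}. P i}. g i)) \<bullet> b =
    ((\<Sum>i<m. (g i \<bullet> b) * (if P i then 1 else 0)) / real m) / ((\<Sum>i<m. (if P i then 1 else 0 :: real)) / real m)"
proof (cases "m = 0")
  case True
  then show ?thesis by simp
next
  case False
  have c: "real (card {i\<in>{..<m}. P i}) = (\<Sum>i<m. (if P i then 1 else 0 :: real))"
    by (simp add: sum.inter_filter[symmetric])
  have s: "(\<Sum>i\<in>{i\<in>{..<m}. P i}. g i) \<bullet> b = (\<Sum>i<m. (g i \<bullet> b) * (if P i then 1 else 0))"
  proof -
    have "(\<Sum>i\<in>{i\<in>{..<m}. P i}. g i) \<bullet> b = (\<Sum>i\<in>{i\<in>{..<m}. P i}. g i \<bullet> b)"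
      by (simp only: inner_sum_left)
    also have "\<dots> = (\<Sum>i<m. if P i then g i \<bullet> b else 0)" by (rule sum.inter_filter) simp
    also have "\<dots> = (\<Sum>i<m. (g i \<bullet> b) * (if P i then 1 else 0))" by (intro sum.cong) auto
    finally show ?thesis .
  qed
  have gen: "(x / real m) / (y / real m) = x / y" for x y :: real
    using False by (cases "y = 0") (simp_all add: field_simps)
  show ?thesis unfolding gen c[symmetric] s[symmetric] by (simp add: divide_inverse mult.commute)
qed

lemma slln_apply:
  fixes P :: "'w measure" and N :: "nat \<Rightarrow> 'w \<Rightarrow> 'a::euclidean_space" and g :: "'a \<Rightarrow> real"
  assumes "prob_space P"
    and ind: "prob_space.indep_vars P (\<lambda>_. borel) N UNIV"
    and dist: "\<And>i. distr P borel (N i) = std_normal_vec"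
    and g[measurable]: "g \<in> borel_measurable borel"
    and g4: "integrable (std_normal_vec :: 'a measure) (\<lambda>n. (g n)^4)"
  shows "AE \<omega> in P. (\<lambda>m. (\<Sum>i<m. g (N i \<omega>)) / real m) \<longlonglongrightarrow> integral\<^sup>L (std_normal_vec :: 'a measure) g"
proof -
  interpret prob_space P by fact
  have rv[measurable]: "\<And>i. N i \<in> borel_measurable P"
    using ind unfolding indep_vars_def by auto
  have indg: "indep_vars (\<lambda>_. borel) (\<lambda>i \<omega>. g (N i \<omega>)) UNIV"
    by (rule indep_vars_compose2[OF ind]) auto
  have dg: "distr P borel (\<lambda>\<omega>. g (N i \<omega>)) = distr std_normal_vec borel g" for i
  proof -
    have "distr P borel (\<lambda>\<omega>. g (N i \<omega>)) = distr P borel (g \<circ> N i)" by (simp add: comp_def)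
    also have "\<dots> = distr (distr P borel (N i)) borel g" by (rule distr_distr[symmetric]) auto
    finally show ?thesis by (simp add: dist)
  qed
  have i4: "integrable P (\<lambda>\<omega>. (g (N 0 \<omega>))^4)"
    using integrable_distr_eq[OF rv[of 0], of "\<lambda>n. (g n)^4"] g4 dist[of 0] by simp
  have E: "expectation (\<lambda>\<omega>. g (N 0 \<omega>)) = integral\<^sup>L (std_normal_vec :: 'a measure) g"
    using integral_distr[OF rv[of 0] g] dist[of 0] by simp
  show ?thesis
    using slln_iid[OF indg _ i4] dg E by simp
qed


lemma int4_by_inner:
  fixes h :: "'a::euclidean_space \<Rightarrow> real"
  assumes [measurable]: "h \<in> borel_measurable borel" and bd: "\<And>n. \<bar>h n\<bar> \<le> \<bar>n \<bullet> b\<bar>"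
  shows "integrable (std_normal_vec :: 'a measure) (\<lambda>n. (h n)^4)"
proof (rule Bochner_Integration.integrable_bound[OF gauss_4[of b]])
  show "(\<lambda>n. (h n)^4) \<in> borel_measurable (std_normal_vec :: 'a measure)" by measurable
  show "AE n in std_normal_vec. norm ((h n)^4) \<le> norm ((n \<bullet> b)^4)"
  proof (intro AE_I2)
    fix n :: 'a
    have "\<bar>h n\<bar>^4 \<le> \<bar>n \<bullet> b\<bar>^4" by (rule power_mono[OF bd]) simp
    then show "norm ((h n)^4) \<le> norm ((n \<bullet> b)^4)" by (simp add: power_abs)
  qed
qed

lemma int4_by_one:
  fixes h :: "'a::euclidean_space \<Rightarrow> real"
  assumes [measurable]: "h \<in> borel_measurable borel" and bd: "\<And>n. \<bar>h n\<bar> \<le> 1"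
  shows "integrable (std_normal_vec :: 'a measure) (\<lambda>n. (h n)^4)"
proof -
  interpret S: prob_space "std_normal_vec :: 'a measure" by (rule prob_space_std)
  show ?thesis
  proof (rule Bochner_Integration.integrable_bound[of _ "\<lambda>_. 1::real"])
    show "integrable (std_normal_vec :: 'a measure) (\<lambda>_. 1::real)" by simp
    show "(\<lambda>n. (h n)^4) \<in> borel_measurable (std_normal_vec :: 'a measure)" by measurable
    show "AE n in std_normal_vec. norm ((h n)^4) \<le> norm (1::real)"
    proof (intro AE_I2)
      fix n :: 'a
      have "\<bar>h n\<bar>^4 \<le> 1^4" by (rule power_mono[OF bd]) simp
      then show "norm ((h n)^4) \<le> norm (1::real)" by (simp add: power_abs)
    qed
  qed
qed

theorem theorem2:
  fixes P :: "'w measure" and N :: "nat \<Rightarrow> 'w \<Rightarrow> 'a::euclidean_space" and x0 x1 :: 'a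
  assumes "prob_space P"
    and "prob_space.indep_vars P (\<lambda>_. borel) N UNIV"
    and "\<And>i. distr P borel (N i) = std_normal_vec"
    and "x0 \<noteq> x1"
    and "norm x0 = norm x1"
    and "\<bar>inner x0 x1 / (norm x0)\<^sup>2\<bar> < 1"
  shows "AE \<omega> in P.
    ((\<lambda>m. hard_estimate x0 x1 (\<lambda>i. N i \<omega>) m 0) \<longlonglongrightarrow>
       sqrt (1 / (pi * (1 - inner x0 x1 / (norm x0)\<^sup>2) * (norm x0)\<^sup>2)) *\<^sub>R (x0 - x1)) \<and>
    ((\<lambda>m. hard_estimate x0 x1 (\<lambda>i. N i \<omega>) m 1) \<longlonglongrightarrow>
       sqrt (1 / (pi * (1 - inner x0 x1 / (norm x0)\<^sup>2) * (norm x0)\<^sup>2)) *\<^sub>R (x1 - x0))"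
proof -
  interpret prob_space P by fact
  interpret S: prob_space "std_normal_vec :: 'a measure" by (rule prob_space_std)
  define v where "v = x0 - x1"
  have v0: "v \<noteq> 0" using assms(4) unfolding v_def by simp
  have nx0: "norm x0 \<noteq> 0" using assms(4,5) by auto
  define K where "K = sqrt (1 / (pi * (1 - inner x0 x1 / (norm x0)\<^sup>2) * (norm x0)\<^sup>2))"
  have Keq: "K = sqrt (2 / pi) / norm v"
  proof -
    have xx: "x1 \<bullet> x1 = x0 \<bullet> x0" using assms(5) by (metis power2_norm_eq_inner)
    have nv: "(norm v)\<^sup>2 = 2 * (norm x0)\<^sup>2 - 2 * inner x0 x1"
      unfolding v_def using xx
      by (simp add: power2_norm_eq_inner inner_diff_left inner_diff_right inner_commute)
    have Q: "pi * (1 - inner x0 x1 / (norm x0)\<^sup>2) * (norm x0)\<^sup>2 = pi * (norm v)\<^sup>2 / 2"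
      using nx0 unfolding nv by (simp add: field_simps)
    have "K = sqrt (1 / (pi * (norm v)\<^sup>2 / 2))" unfolding K_def Q ..
    also have "1 / (pi * (norm v)\<^sup>2 / 2) = 2 / (pi * (norm v)\<^sup>2)" by simp
    finally have "K = sqrt (2 / (pi * (norm v)\<^sup>2))" .
    also have "\<dots> = sqrt (2 / pi) / norm v"
      by (simp add: real_sqrt_divide real_sqrt_mult)
    finally show ?thesis .
  qed
  define g1 where "g1 = (\<lambda>n::'a. indicator {0..} (n \<bullet> v) :: real)"
  have g1m[measurable]: "g1 \<in> borel_measurable borel" unfolding g1_def by measurable
  have g1b: "\<bar>g1 n\<bar> \<le> 1" for n unfolding g1_def by (simp add: indicator_def)
  have ha0: "(if hard_assign x0 x1 n = 0 then 1 else 0) = g1 n" for n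
    unfolding g1_def hard_assign_def v_def by (simp add: inner_diff_right indicator_def)
  have ha1: "(if hard_assign x0 x1 n = 1 then 1 else 0) = 1 - g1 n" for n
    unfolding g1_def hard_assign_def v_def by (simp add: inner_diff_right indicator_def)
  have Eg1: "integral\<^sup>L std_normal_vec g1 = 1 / 2" unfolding g1_def using gauss_half[OF v0] by simp
  have Ig1: "integrable std_normal_vec g1"
    by (rule Bochner_Integration.integrable_bound[of _ "\<lambda>_. 1::real"]) (auto simp: g1_def indicator_def)
  note SL = slln_apply[OF assms(1,2,3)]
  have L1: "AE \<omega> in P. (\<lambda>m. (\<Sum>i<m. g1 (N i \<omega>)) / real m) \<longlonglongrightarrow> 1 / 2"
    using SL[OF g1m int4_by_one[OF g1m g1b]] unfolding Eg1 .
  have L3: "AE \<omega> in P. (\<lambda>m. (\<Sum>i<m. 1 - g1 (N i \<omega>)) / real m) \<longlonglongrightarrow> 1 / 2"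
  proof -
    have m: "(\<lambda>n. 1 - g1 n) \<in> borel_measurable borel" by measurable
    have b: "\<bar>1 - g1 n\<bar> \<le> 1" for n unfolding g1_def by (simp add: indicator_def)
    have E3: "integral\<^sup>L std_normal_vec (\<lambda>n. 1 - g1 n) = 1 / 2" using Ig1 Eg1 S.prob_space by simp
    show ?thesis using SL[OF m int4_by_one[OF m b]] unfolding E3 .
  qed
  have L2: "AE \<omega> in P. \<forall>b\<in>Basis. (\<lambda>m. (\<Sum>i<m. (N i \<omega> \<bullet> b) * g1 (N i \<omega>)) / real m) \<longlonglongrightarrow> sqrt (2 / pi) * (v \<bullet> b) / (2 * norm v)"
  proof (subst AE_ball_countable)
    show "countable (Basis :: 'a set)" by (rule countable_finite[OF finite_Basis])
    show "\<forall>b\<in>Basis. AE \<omega> in P. (\<lambda>m. (\<Sum>i<m. (N i \<omega> \<bullet> b) * g1 (N i \<omega>)) / real m) \<longlonglongrightarrow> sqrt (2 / pi) * (v \<bullet> b) / (2 * norm v)"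
    proof
      fix b :: 'a assume "b \<in> Basis"
      have m: "(\<lambda>n. (n \<bullet> b) * g1 n) \<in> borel_measurable borel" by measurable
      have bd: "\<bar>(n \<bullet> b) * g1 n\<bar> \<le> \<bar>n \<bullet> b\<bar>" for n unfolding g1_def by (simp add: indicator_def)
      have E2: "integral\<^sup>L std_normal_vec (\<lambda>n. (n \<bullet> b) * g1 n) = sqrt (2 / pi) * (v \<bullet> b) / (2 * norm v)"
        unfolding g1_def using gauss_pos(2)[OF v0, of b] by (simp add: inner_commute)
      show "AE \<omega> in P. (\<lambda>m. (\<Sum>i<m. (N i \<omega> \<bullet> b) * g1 (N i \<omega>)) / real m) \<longlonglongrightarrow> sqrt (2 / pi) * (v \<bullet> b) / (2 * norm v)"
        using SL[OF m int4_by_inner[OF m bd]] unfolding E2 .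
    qed
  qed
  have L4: "AE \<omega> in P. \<forall>b\<in>Basis. (\<lambda>m. (\<Sum>i<m. (N i \<omega> \<bullet> b) * (1 - g1 (N i \<omega>))) / real m) \<longlonglongrightarrow> - (sqrt (2 / pi) * (v \<bullet> b) / (2 * norm v))"
  proof (subst AE_ball_countable)
    show "countable (Basis :: 'a set)" by (rule countable_finite[OF finite_Basis])
    show "\<forall>b\<in>Basis. AE \<omega> in P. (\<lambda>m. (\<Sum>i<m. (N i \<omega> \<bullet> b) * (1 - g1 (N i \<omega>))) / real m) \<longlonglongrightarrow> - (sqrt (2 / pi) * (v \<bullet> b) / (2 * norm v))"
    proof
      fix b :: 'a assume "b \<in> Basis"
      have m: "(\<lambda>n. (n \<bullet> b) * (1 - g1 n)) \<in> borel_measurable borel" by measurable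
      have bd: "\<bar>(n \<bullet> b) * (1 - g1 n)\<bar> \<le> \<bar>n \<bullet> b\<bar>" for n unfolding g1_def by (simp add: indicator_def)
      have i2: "integrable std_normal_vec (\<lambda>n. (n \<bullet> b) * g1 n)" unfolding g1_def using gauss_pos(1)[OF v0, of b] .
      have i1: "integrable std_normal_vec (\<lambda>n. (n \<bullet> b))" using gauss_lin by blast
      have E4: "integral\<^sup>L std_normal_vec (\<lambda>n. (n \<bullet> b) * (1 - g1 n)) = integral\<^sup>L std_normal_vec (\<lambda>n. (n \<bullet> b) - (n \<bullet> b) * g1 n)"
        by (simp add: algebra_simps)
      also have "\<dots> = - (sqrt (2 / pi) * (v \<bullet> b) / (2 * norm v))"
        using i1 i2 gauss_lin[of b] gauss_pos(2)[OF v0, of b] unfolding g1_def by (simp add: inner_commute)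
      finally have E4': "integral\<^sup>L std_normal_vec (\<lambda>n. (n \<bullet> b) * (1 - g1 n)) = - (sqrt (2 / pi) * (v \<bullet> b) / (2 * norm v))" .
      show "AE \<omega> in P. (\<lambda>m. (\<Sum>i<m. (N i \<omega> \<bullet> b) * (1 - g1 (N i \<omega>))) / real m) \<longlonglongrightarrow> - (sqrt (2 / pi) * (v \<bullet> b) / (2 * norm v))"
        using SL[OF m int4_by_inner[OF m bd]] unfolding E4' .
    qed
  qed
  show ?thesis
    using L1 L2 L3 L4
  proof eventually_elim
    case (elim \<omega>)
    have C0: "(\<lambda>m. hard_estimate x0 x1 (\<lambda>i. N i \<omega>) m 0) \<longlonglongrightarrow> K *\<^sub>R (x0 - x1)"
    proof (rule tendsto_componentwise_Basis)
      fix b :: 'a assume b: "b \<in> Basis"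
      have eq: "hard_estimate x0 x1 (\<lambda>i. N i \<omega>) m 0 \<bullet> b =
          ((\<Sum>i<m. (N i \<omega> \<bullet> b) * g1 (N i \<omega>)) / real m) / ((\<Sum>i<m. g1 (N i \<omega>)) / real m)" for m
        unfolding hard_estimate_def hard_cluster_def avg_filter ha0 ..
      have "(\<lambda>m. ((\<Sum>i<m. (N i \<omega> \<bullet> b) * g1 (N i \<omega>)) / real m) / ((\<Sum>i<m. g1 (N i \<omega>)) / real m))
          \<longlonglongrightarrow> (sqrt (2 / pi) * (v \<bullet> b) / (2 * norm v)) / (1 / 2)"
      proof -
        have n: "(\<lambda>m. (\<Sum>i<m. (N i \<omega> \<bullet> b) * g1 (N i \<omega>)) / real m) \<longlonglongrightarrow> sqrt (2 / pi) * (v \<bullet> b) / (2 * norm v)"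
          using elim(2) b by blast
        have d: "(\<lambda>m. (\<Sum>i<m. g1 (N i \<omega>)) / real m) \<longlonglongrightarrow> 1 / 2" using elim(1) .
        show ?thesis using tendsto_divide[OF n d] by simp
      qed
      moreover have "(sqrt (2 / pi) * (v \<bullet> b) / (2 * norm v)) / (1 / 2) = (K *\<^sub>R (x0 - x1)) \<bullet> b"
        unfolding Keq v_def[symmetric] using v0 by simp
      ultimately show "(\<lambda>m. hard_estimate x0 x1 (\<lambda>i. N i \<omega>) m 0 \<bullet> b) \<longlonglongrightarrow> (K *\<^sub>R (x0 - x1)) \<bullet> b"
        unfolding eq by simp
    qed
    have C1: "(\<lambda>m. hard_estimate x0 x1 (\<lambda>i. N i \<omega>) m 1) \<longlonglongrightarrow> K *\<^sub>R (x1 - x0)"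
    proof (rule tendsto_componentwise_Basis)
      fix b :: 'a assume b: "b \<in> Basis"
      have eq: "hard_estimate x0 x1 (\<lambda>i. N i \<omega>) m 1 \<bullet> b =
          ((\<Sum>i<m. (N i \<omega> \<bullet> b) * (1 - g1 (N i \<omega>))) / real m) / ((\<Sum>i<m. 1 - g1 (N i \<omega>)) / real m)" for m
        unfolding hard_estimate_def hard_cluster_def avg_filter ha1 ..
      have "(\<lambda>m. ((\<Sum>i<m. (N i \<omega> \<bullet> b) * (1 - g1 (N i \<omega>))) / real m) / ((\<Sum>i<m. 1 - g1 (N i \<omega>)) / real m))
          \<longlonglongrightarrow> (- (sqrt (2 / pi) * (v \<bullet> b) / (2 * norm v))) / (1 / 2)"
      proof -
        have n: "(\<lambda>m. (\<Sum>i<m. (N i \<omega> \<bullet> b) * (1 - g1 (N i \<omega>))) / real m) \<longlonglongrightarrow> - (sqrt (2 / pi) * (v \<bullet> b) / (2 * norm v))"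
          using elim(4) b by blast
        have d: "(\<lambda>m. (\<Sum>i<m. 1 - g1 (N i \<omega>)) / real m) \<longlonglongrightarrow> 1 / 2" using elim(3) .
        show ?thesis using tendsto_divide[OF n d] by simp
      qed
      moreover have "(- (sqrt (2 / pi) * (v \<bullet> b) / (2 * norm v))) / (1 / 2) = (K *\<^sub>R (x1 - x0)) \<bullet> b"
      proof -
        have "x1 - x0 = - v" unfolding v_def by simp
        then show ?thesis unfolding Keq using v0 by simp
      qed
      ultimately show "(\<lambda>m. hard_estimate x0 x1 (\<lambda>i. N i \<omega>) m 1 \<bullet> b) \<longlonglongrightarrow> (K *\<^sub>R (x1 - x0)) \<bullet> b"
        unfolding eq by simp
    qed
    show ?case using C0 C1 unfolding K_def by blast
  qed
qed

end
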